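(* Let $(V,g)$ be an $n$-dimensional Euclidean vector space, let $\mathfrak{R}\colon \Lambda^2 V \to \Lambda^2 V$ be an algebraic curvature operator with eigenvalues $\lambda_1 \leq \ldots \leq \lambda_{\binom{n}{2}}$, and let $T \in \mathcal{T}^{(0,k)}(V)$. Suppose there is a real number $C \geq 1$ such that $$ |LT|^2 \leq \frac{1}{C} |\hat{T}|^2 |L|^2 \quad \text{for all } L \in \mathfrak{so}(V). $$ Let $\kappa \leq 0$. If $\frac{1}{\lfloor C \rfloor}(\lambda_1 + \ldots + \lambda_{\lfloor C \rfloor}) \geq \kappa$, then $g(\mathfrak{R}(\hat{T}), \hat{T}) \geq \kappa |\hat{T}|^2$. If $\lambda_1 + \ldots + \lambda_{\lfloor C \rfloor} > 0$, then $g(\mathfrak{R}(\hat{T}), \hat{T}) > 0$ unless $\hat{T} = 0$.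
   Context: $\mathcal{T}^{(0,k)}(V)$ is the space of $(0,k)$-tensors, with norm $|T|^2 = \sum_{i_1,\ldots,i_k} T_{i_1\ldots i_k}^2$ in any orthonormal basis. $\mathfrak{so}(V)$ is identified with $\Lambda^2 V$ via $(X \wedge Y)(Z) = g(X,Z)Y - g(Y,Z)X$, and $\Lambda^2 V$ carries the inner product for which $\{e_i \wedge e_j\}_{i<j}$ is orthonormal whenever $\{e_i\}$ is; $|L|$ is the corresponding norm. For $L \in \mathfrak{so}(V)$, $(LT)(X_1,\ldots,X_k) = -\sum_{i=1}^k T(X_1,\ldots,LX_i,\ldots,X_k)$. The tensor $\hat{T} \in \Lambda^2 V \otimes \mathcal{T}^{(0,k)}(V)$ is defined by $g(L, \hat{T}(X_1,\ldots,X_k)) = (LT)(X_1,\ldots,X_k)$ for all $L$; equivalently $\hat{T} = \sum_\alpha \Xi_\alpha \otimes \Xi_\alpha T$ for any orthonormal basis $\{\Xi_\alpha\}$ of $\Lambda^2 V$, so $|\hat{T}|^2 = \sum_\alpha |\Xi_\alpha T|^2$. Further $\mathfrak{R}(\hat{T}) = \sum_\alpha \mathfrak{R}(\Xi_\alpha) \otimes \Xi_\alpha T$ and $g(\mathfrak{R}(\hat{T}),\hat{T}) = \sum_{\alpha,\beta} g(\mathfrak{R}(\Xi_\alpha),\Xi_\beta)\, g(\Xi_\alpha T, \Xi_\beta T)$. An algebraic curvature operator is a self-adjoint map $\mathfrak{R}$ on $\Lambda^2 V$ whose associated tensor $\operatorname{Rm}(x,y,z,w) = g(\mathfrak{R}(x\wedge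 y), z \wedge w)$ satisfies the first Bianchi identity. *)

theory Defs
  imports "HOL-Analysis.Analysis"
begin

text \<open>V = real^'n with its standard Euclidean inner product g; e i is the standard
  orthonormal basis. Elements of so(V) = Lambda^2 V are represented as skew-symmetric
  matrices (acting on V by matrix-vector product).\<close>

definition e :: "'n::finite \<Rightarrow> real^'n" where
  "e i = axis i 1"

text \<open>(X \<and> Y)(Z) = g(X,Z) Y - g(Y,Z) X, as a matrix.\<close>
definition wedge :: "real^'n::finite \<Rightarrow> real^'n \<Rightarrow> real^'n^'n" where
  "wedge X Y = (\<chi> a b. Y $ a * X $ b - X $ a * Y $ b)"

definition skew :: "real^'n::finite^'n \<Rightarrow> bool" where
  "skew A \<longleftrightarrow> transpose A = - A"

text \<open>Inner product on Lambda^2 V making e_i \<and> e_j (i<j) orthonormal.\<close>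
definition lam_inner :: "real^'n::finite^'n \<Rightarrow> real^'n^'n \<Rightarrow> real" where
  "lam_inner A B = (1/2) * (\<Sum>a\<in>UNIV. \<Sum>b\<in>UNIV. A $ a $ b * B $ a $ b)"

text \<open>(0,k)-tensors: functions of lists of vectors, multilinear on lists of length k.\<close>
definition tensor :: "nat \<Rightarrow> ((real^'n::finite) list \<Rightarrow> real) \<Rightarrow> bool" where
  "tensor k T \<longleftrightarrow> (\<forall>Xs i. length Xs = k \<longrightarrow> i < k \<longrightarrow> linear (\<lambda>v. T (Xs[i := v])))"

definition tnorm2 :: "nat \<Rightarrow> ((real^'n::finite) list \<Rightarrow> real) \<Rightarrow> real" where
  "tnorm2 k T = (\<Sum>is\<in>{is::'n list. length is = k}. (T (map e is))\<^sup>2)"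

definition act :: "real^'n::finite^'n \<Rightarrow> ((real^'n) list \<Rightarrow> real) \<Rightarrow> (real^'n) list \<Rightarrow> real" where
  "act L T Xs = - (\<Sum>i<length Xs. T (Xs[i := L *v (Xs ! i)]))"

text \<open>\<hat>T(X_1..X_k) in Lambda^2 V: g(L, \<hat>T(X)) = (L T)(X). Expanded in the
  orthonormal basis {e_a \<and> e_b}_{a<b}; the factor 1/2 accounts for summing over all
  ordered pairs (a,b).\<close>
definition hat :: "((real^'n::finite) list \<Rightarrow> real) \<Rightarrow> (real^'n) list \<Rightarrow> real^'n^'n" where
  "hat T Xs = (\<Sum>a\<in>UNIV. \<Sum>b\<in>UNIV.
      ((1/2) * act (wedge (e a) (e b)) T Xs) *\<^sub>R wedge (e a) (e b))"

definition hat_norm2 :: "nat \<Rightarrow> ((real^'n::finite) list \<Rightarrow> real) \<Rightarrow> real" where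
  "hat_norm2 k T = (\<Sum>is\<in>{is::'n list. length is = k}.
      lam_inner (hat T (map e is)) (hat T (map e is)))"

definition curv_pairing ::
  "(real^'n::finite^'n \<Rightarrow> real^'n^'n) \<Rightarrow> nat \<Rightarrow> ((real^'n) list \<Rightarrow> real) \<Rightarrow> real" where
  "curv_pairing R k T = (\<Sum>is\<in>{is::'n list. length is = k}.
      lam_inner (R (hat T (map e is))) (hat T (map e is)))"

definition alg_curv_op :: "(real^'n::finite^'n \<Rightarrow> real^'n^'n) \<Rightarrow> bool" where
  "alg_curv_op R \<longleftrightarrow>
     (\<forall>A. skew A \<longrightarrow> skew (R A)) \<and>
     (\<forall>A B a b. skew A \<longrightarrow> skew B \<longrightarrow> R (a *\<^sub>R A + b *\<^sub>R B) = a *\<^sub>R R A + b *\<^sub>R R B) \<and>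
     (\<forall>A B. skew A \<longrightarrow> skew B \<longrightarrow> lam_inner (R A) B = lam_inner A (R B)) \<and>
     (\<forall>x y z w. lam_inner (R (wedge x y)) (wedge z w)
                + lam_inner (R (wedge y z)) (wedge x w)
                + lam_inner (R (wedge z x)) (wedge y w) = 0)"

text \<open>lam 1 \<le> ... \<le> lam N (N = n choose 2) are the eigenvalues of R, listed with
  multiplicity: they are the eigenvalues of an orthonormal eigenbasis of Lambda^2 V.\<close>
definition curv_eigenvalues :: "(real^'n::finite^'n \<Rightarrow> real^'n^'n) \<Rightarrow> (nat \<Rightarrow> real) \<Rightarrow> bool" where
  "curv_eigenvalues R lam \<longleftrightarrow>
     (let N = CARD('n) choose 2 in
      (\<forall>i j. 1 \<le> i \<longrightarrow> i \<le> j \<longrightarrow> j \<le> N \<longrightarrow> lam i \<le> lam j) \<and>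
      (\<exists>\<Xi> :: nat \<Rightarrow> real^'n^'n.
         (\<forall>\<alpha>\<in>{1..N}. skew (\<Xi> \<alpha>) \<and> R (\<Xi> \<alpha>) = lam \<alpha> *\<^sub>R \<Xi> \<alpha>) \<and>
         (\<forall>\<alpha>\<in>{1..N}. \<forall>\<beta>\<in>{1..N}. lam_inner (\<Xi> \<alpha>) (\<Xi> \<beta>) = (if \<alpha> = \<beta> then 1 else 0))))"

end

theory Submission
  imports Defs
begin


lemma e_nth: "e a $ i = (if i = a then 1 else 0)"
  by (simp add: e_def axis_def)

lemma lam_inner_inner: "lam_inner A B = (A \<bullet> B) / 2"
  by (simp add: lam_inner_def inner_vec_def)

lemma skew_iff: "skew A \<longleftrightarrow> (\<forall>i j. A $ j $ i = - (A $ i $ j))"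
  unfolding skew_def transpose_def by (auto simp: vec_eq_iff)

lemma skewD: "skew A \<Longrightarrow> A $ j $ i = - (A $ i $ j)"
  unfolding skew_iff by blast
lemma skew_0[simp]: "skew 0" unfolding skew_iff by simp
lemma skew_add: "skew A \<Longrightarrow> skew B \<Longrightarrow> skew (A + B)"
  unfolding skew_iff proof (intro allI)
  fix i j assume "\<forall>i j. A $ j $ i = - A $ i $ j" "\<forall>i j. B $ j $ i = - B $ i $ j"
  then have "A $ j $ i = - A $ i $ j" "B $ j $ i = - B $ i $ j" by blast+
  then show "(A + B) $ j $ i = - (A + B) $ i $ j" by simp
qed
lemma skew_scale: "skew A \<Longrightarrow> skew (c *\<^sub>R A)"
  unfolding skew_iff proof (intro allI)
  fix i j assume "\<forall>i j. A $ j $ i = - A $ i $ j"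
  then have "A $ j $ i = - A $ i $ j" by blast
  then show "(c *\<^sub>R A) $ j $ i = - (c *\<^sub>R A) $ i $ j" by simp
qed
lemma skew_sum: "(\<And>x. x \<in> S \<Longrightarrow> skew (f x)) \<Longrightarrow> skew (\<Sum>x\<in>S. f x)"
  by (induction S rule: infinite_finite_induct) (auto intro: skew_add)
lemma skew_wedge: "skew (wedge X Y)" by (simp add: skew_iff wedge_def)
lemma skew_hat: "skew (hat T Xs)"
  unfolding hat_def by (intro skew_sum skew_scale skew_wedge)

lemma wedge_nth0: "wedge X Y $ i $ j = Y $ i * X $ j - X $ i * Y $ j"
  unfolding wedge_def by simp
lemma wedge_nth: "wedge (e a) (e b) $ i $ j = (if i = b \<and> j = a then 1 else 0) - (if i = a \<and> j = b then 1 else 0)"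
  unfolding wedge_nth0 e_nth by (cases "i=b"; cases "j=a"; cases "i=a"; cases "j=b"; simp only: if_True if_False simp_thms mult_1_left mult_zero_left mult_1_right mult_zero_right)

lemma dd:
  fixes f :: "'a::finite \<Rightarrow> 'b::finite \<Rightarrow> real"
  shows "(\<Sum>a\<in>UNIV. \<Sum>b\<in>UNIV. if a = p \<and> b = q then f a b else 0) = f p q"
proof -
  have "(\<Sum>b\<in>UNIV. if a = p \<and> b = q then f a b else 0) = (if a = p then f a q else 0)" for a
    by (cases "a = p") (simp_all add: sum.delta')
  then show ?thesis by (simp add: sum.delta')
qed

lemma mult_wedge: "c * wedge (e a) (e b) $ i $ j = (if i = b \<and> j = a then c else 0) - (if i = a \<and> j = b then c else 0)"
proof -
  have gen: "(c::real) * ((if P then 1 else 0) - (if Q then 1 else 0)) = (if P then c else 0) - (if Q then c else 0)" for P Q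
    by (cases P; cases Q) simp_all
  show ?thesis unfolding wedge_nth by (rule gen)
qed

lemma dd2:
  fixes f :: "'a::finite \<Rightarrow> 'b::finite \<Rightarrow> real"
  shows "(\<Sum>a\<in>UNIV. \<Sum>b\<in>UNIV. if p = b \<and> q = a then f a b else 0) = f q p"
proof -
  have "(\<Sum>a\<in>UNIV. \<Sum>b\<in>UNIV. if p = b \<and> q = a then f a b else 0)
      = (\<Sum>a\<in>UNIV. \<Sum>b\<in>UNIV. if a = q \<and> b = p then f a b else 0)"
    by (intro sum.cong refl) auto
  then show ?thesis by (simp only: dd)
qed

lemma dd3:
  fixes f :: "'a::finite \<Rightarrow> 'b::finite \<Rightarrow> real"
  shows "(\<Sum>a\<in>UNIV. \<Sum>b\<in>UNIV. if p = a \<and> q = b then f a b else 0) = f p q"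
proof -
  have "(\<Sum>a\<in>UNIV. \<Sum>b\<in>UNIV. if p = a \<and> q = b then f a b else 0)
      = (\<Sum>a\<in>UNIV. \<Sum>b\<in>UNIV. if a = p \<and> b = q then f a b else 0)"
    by (intro sum.cong refl) auto
  then show ?thesis by (simp only: dd)
qed

lemma lam_inner_wedge: "skew L \<Longrightarrow> lam_inner L (wedge (e a) (e b)) = - L $ a $ b"
proof -
  assume s: "skew L"
  have "lam_inner L (wedge (e a) (e b)) = (1/2) * ((\<Sum>i\<in>UNIV. \<Sum>j\<in>UNIV. if i = b \<and> j = a then L $ i $ j else 0)
      - (\<Sum>i\<in>UNIV. \<Sum>j\<in>UNIV. if i = a \<and> j = b then L $ i $ j else 0))"
    unfolding lam_inner_def mult_wedge by (simp only: sum_subtractf)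
  also have "\<dots> = (1/2) * (L $ b $ a - L $ a $ b)" by (simp only: dd)
  also have "\<dots> = - L $ a $ b" using skewD[OF s, of b a] by simp
  finally show ?thesis .
qed

lemma skew_expand:
  assumes "skew L"
  shows "L = (\<Sum>a\<in>UNIV. \<Sum>b\<in>UNIV. (- (1/2) * L $ a $ b) *\<^sub>R wedge (e a) (e b))"
proof -
  have *: "(\<Sum>a\<in>UNIV. \<Sum>b\<in>UNIV. (- (1/2) * L $ a $ b) *\<^sub>R wedge (e a) (e b)) $ i $ j = L $ i $ j" for i j
  proof -
    have "(\<Sum>a\<in>UNIV. \<Sum>b\<in>UNIV. (- (1/2) * L $ a $ b) *\<^sub>R wedge (e a) (e b)) $ i $ j
        = (\<Sum>a\<in>UNIV. \<Sum>b\<in>UNIV. (- (1/2) * L $ a $ b) * wedge (e a) (e b) $ i $ j)"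
      by (simp only: sum_component vector_scaleR_component real_scaleR_def)
    also have "\<dots> = (\<Sum>a\<in>UNIV. \<Sum>b\<in>UNIV. if i = b \<and> j = a then (- (1/2) * L $ a $ b) else 0)
       - (\<Sum>a\<in>UNIV. \<Sum>b\<in>UNIV. if i = a \<and> j = b then (- (1/2) * L $ a $ b) else 0)"
      by (simp only: mult_wedge sum_subtractf)
    also have "\<dots> = (- (1/2) * L $ j $ i) - (- (1/2) * L $ i $ j)" by (simp only: dd2 dd3)
    also have "\<dots> = L $ i $ j" using skewD[OF assms, of j i] by simp
    finally show ?thesis .
  qed
  show ?thesis
  proof (subst vec_eq_iff, intro allI, subst vec_eq_iff, intro allI)
    fix i j show "L $ i $ j = (\<Sum>a\<in>UNIV. \<Sum>b\<in>UNIV. (- (1/2) * L $ a $ b) *\<^sub>R wedge (e a) (e b)) $ i $ j"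
      using *[of i j] by (rule sym)
  qed
qed



lemma linear_mv: "linear (\<lambda>L::real^'n::finite^'m::finite. L *v x)"
  by (auto intro!: linearI simp: vec_eq_iff matrix_vector_mult_def sum.distrib algebra_simps sum_distrib_left)

lemma act_linear:
  assumes "tensor k T" "length Xs = k"
  shows "linear (\<lambda>L. act L T Xs)"
proof -
  have "linear (\<lambda>L. T (Xs[i := L *v (Xs ! i)]))" if "i < length Xs" for i
  proof -
    have "linear (\<lambda>v. T (Xs[i := v]))" using assms that by (simp add: tensor_def)
    from linear_compose[OF linear_mv this] show ?thesis by (simp add: o_def)
  qed
  then have "linear (\<lambda>L. \<Sum>i<length Xs. T (Xs[i := L *v (Xs ! i)]))"
    by (intro linear_compose_sum) auto
  then show ?thesis unfolding act_def by (rule linear_compose_neg)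
qed

lemma act_hat:
  assumes "skew L" "tensor k T" "length Xs = k"
  shows "act L T Xs = lam_inner L (hat T Xs)"
proof -
  interpret lin: linear "\<lambda>L. act L T Xs" by (rule act_linear[OF assms(2,3)])
  have "act L T Xs = act (\<Sum>a\<in>UNIV. \<Sum>b\<in>UNIV. (- (1/2) * L $ a $ b) *\<^sub>R wedge (e a) (e b)) T Xs"
    using skew_expand[OF assms(1)] by simp
  also have "\<dots> = (\<Sum>a\<in>UNIV. \<Sum>b\<in>UNIV. (- (1/2) * L $ a $ b) * act (wedge (e a) (e b)) T Xs)"
    by (simp only: lin.sum lin.scale real_scaleR_def)
  also have "\<dots> = (\<Sum>a\<in>UNIV. \<Sum>b\<in>UNIV. ((1/2) * act (wedge (e a) (e b)) T Xs) * lam_inner L (wedge (e a) (e b)))"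
    by (intro sum.cong refl) (simp add: lam_inner_wedge[OF assms(1)])
  also have "\<dots> = lam_inner L (hat T Xs)"
    unfolding hat_def lam_inner_inner
    by (simp add: inner_sum_right sum_divide_distrib)
  finally show ?thesis .
qed

lemma R_sum:
  assumes "alg_curv_op R" "finite S" "\<And>x. x \<in> S \<Longrightarrow> skew (M x)"
  shows "R (\<Sum>x\<in>S. c x *\<^sub>R M x) = (\<Sum>x\<in>S. c x *\<^sub>R R (M x))"
  using assms(2,3)
proof (induction S rule: finite_induct)
  case empty
  have lin: "\<forall>A B a b. skew A \<longrightarrow> skew B \<longrightarrow> R (a *\<^sub>R A + b *\<^sub>R B) = a *\<^sub>R R A + b *\<^sub>R R B"
    using assms(1) unfolding alg_curv_op_def by blast
  have "R (0 *\<^sub>R 0 + 0 *\<^sub>R 0) = 0 *\<^sub>R R 0 + 0 *\<^sub>R R 0"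
    using lin skew_0 by blast
  then show ?case by simp
next
  case (insert x F)
  have sk: "skew (\<Sum>x\<in>F. c x *\<^sub>R M x)" using insert by (intro skew_sum skew_scale) auto
  have "R (c x *\<^sub>R M x + 1 *\<^sub>R (\<Sum>x\<in>F. c x *\<^sub>R M x)) = c x *\<^sub>R R (M x) + 1 *\<^sub>R R (\<Sum>x\<in>F. c x *\<^sub>R M x)"
  proof -
    have lin: "\<forall>A B a b. skew A \<longrightarrow> skew B \<longrightarrow> R (a *\<^sub>R A + b *\<^sub>R B) = a *\<^sub>R R A + b *\<^sub>R R B"
      using assms(1) unfolding alg_curv_op_def by blast
    have "skew (M x)" using insert.prems by simp
    then show ?thesis using lin sk by blast
  qed
  then show ?case using insert by simp
qed

lemma tensor_act:
  assumes "tensor k T"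
  shows "tensor k (act L T)"
  unfolding tensor_def
proof (intro allI impI)
  fix Xs :: "(real^'a) list" and i
  assume l: "length Xs = k" and i: "i < k"
  define g where "g j v = (if j = i then T (Xs[i := L *v v]) else T ((Xs[j := L *v Xs ! j])[i := v]))" for j v
  have eq: "act L T (Xs[i := v]) = - (\<Sum>j<k. g j v)" for v
    unfolding act_def g_def using l i
    by (auto intro!: sum.cong simp: list_update_swap nth_list_update)
  have lg: "linear (g j)" if "j < k" for j
  proof (cases "j = i")
    case True
    have lt: "linear (\<lambda>v. T (Xs[i := v]))" using assms l i by (simp add: tensor_def)
    have "g j = (\<lambda>v. T (Xs[i := L *v v]))" using True by (simp add: g_def fun_eq_iff)
    then show ?thesis using linear_compose[OF matrix_vector_mul_linear[of L] lt]
      by (simp add: o_def)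
  next
    case False
    have "linear (\<lambda>v. T ((Xs[j := L *v Xs ! j])[i := v]))" using assms l i by (simp add: tensor_def)
    moreover have "g j = (\<lambda>v. T ((Xs[j := L *v Xs ! j])[i := v]))" using False by (simp add: g_def fun_eq_iff)
    ultimately show ?thesis by simp
  qed
  have "linear (\<lambda>v. - (\<Sum>j<k. g j v))"
    by (intro linear_compose_neg linear_compose_sum) (auto intro: lg)
  then show "linear (\<lambda>v. act L T (Xs[i := v]))" by (simp add: eq)
qed

lemma inj_e: "inj e"
  by (auto intro!: injI simp: e_def axis_eq_axis)

lemma vanish:
  assumes "tensor k F" "\<And>is. length is = k \<Longrightarrow> F (map e is) = 0" "length Xs = k"
  shows "F Xs = 0"
proof -
  have "\<forall>Xs. length Xs = k \<longrightarrow> (\<forall>i. j \<le> i \<and> i < k \<longrightarrow> Xs ! i \<in> range e) \<longrightarrow> F Xs = 0"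
    if "j \<le> k" for j
    using that
  proof (induction j)
    case 0
    show ?case
    proof (intro allI impI)
      fix Xs :: "(real^'a) list"
      assume l: "length Xs = k" and b: "\<forall>i. 0 \<le> i \<and> i < k \<longrightarrow> Xs ! i \<in> range e"
      have "map e (map (inv e) Xs) = Xs"
        unfolding map_map
      proof (rule map_idI)
        fix x assume "x \<in> set Xs"
        then obtain i where "i < length Xs" "x = Xs ! i" by (auto simp: in_set_conv_nth)
        then have "x \<in> range e" using l b by auto
        then show "(e \<circ> inv e) x = x" by (simp add: f_inv_into_f)
      qed
      then show "F Xs = 0" using assms(2)[of "map (inv e) Xs"] l by simp
    qed
  next
    case (Suc j)
    show ?case
    proof (intro allI impI)
      fix Xs :: "(real^'a) list"
      assume l: "length Xs = k" and b: "\<forall>i. Suc j \<le> i \<and> i < k \<longrightarrow> Xs ! i \<in> range e"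
      have jk: "j < k" using Suc by simp
      interpret lin: linear "\<lambda>v. F (Xs[j := v])" using assms(1) l jk by (simp add: tensor_def)
      have "Xs ! j = (\<Sum>a\<in>UNIV. (Xs ! j $ a) *\<^sub>R e a)"
        using basis_expansion[of "Xs ! j"] by (simp add: e_def scalar_mult_eq_scaleR)
      then have "F Xs = F (Xs[j := (\<Sum>a\<in>UNIV. (Xs ! j $ a) *\<^sub>R e a)])" by simp
      also have "\<dots> = (\<Sum>a\<in>UNIV. (Xs ! j $ a) * F (Xs[j := e a]))"
        by (simp add: lin.sum lin.scale)
      also have "\<dots> = 0"
      proof (intro sum.neutral ballI)
        fix a
        have "F (Xs[j := e a]) = 0"
          using Suc.IH[of] Suc.prems l b
          by (auto simp: nth_list_update)
        then show "Xs ! j $ a * F (Xs[j := e a]) = 0" by simp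
      qed
      finally show "F Xs = 0" .
    qed
  qed
  from this[of k] assms(3) show ?thesis by auto
qed



lemma wedge_same: "wedge (e a) (e a) = 0"
  by (simp add: vec_eq_iff wedge_nth)

lemma wedge_swap: "wedge (e a) (e b) = - wedge (e b) (e a)"
  by (auto simp add: vec_eq_iff wedge_nth)

lemma dim_skew: "dim {A::real^'n::finite^'n. skew A} \<le> CARD('n) choose 2"
proof -
  obtain f :: "'n \<Rightarrow> nat" where f: "inj f"
    using finite_imp_inj_to_nat_seg[of "UNIV::'n set"] by auto
  define P :: "('n \<times> 'n) set" where "P = {(a,b). f a < f b}"
  define W :: "'n \<times> 'n \<Rightarrow> real^'n^'n" where "W = (\<lambda>(a,b). wedge (e a) (e b))"
  have wsp: "wedge (e a) (e b) \<in> span (W ` P)" for a b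
  proof -
    consider "f a < f b" | "a = b" | "f b < f a"
      using f by (metis injD linorder_neqE_nat)
    then show ?thesis
    proof cases
      case 1 then show ?thesis by (intro span_base) (auto simp: W_def P_def image_iff)
    next
      case 2 then show ?thesis by (simp add: wedge_same span_zero)
    next
      case 3
      have "wedge (e b) (e a) \<in> span (W ` P)"
        using 3 by (intro span_base) (auto simp: W_def P_def image_iff)
      then show ?thesis by (subst wedge_swap) (rule span_neg)
    qed
  qed
  have sub: "{A::real^'n^'n. skew A} \<subseteq> span (W ` P)"
  proof
    fix A :: "real^'n^'n" assume "A \<in> {A. skew A}"
    then have "skew A" by simp
    then have "A = (\<Sum>a\<in>UNIV. \<Sum>b\<in>UNIV. (- (1/2) * A $ a $ b) *\<^sub>R wedge (e a) (e b))"
      by (rule skew_expand)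
    also have "\<dots> \<in> span (W ` P)"
      by (intro span_sum span_mul wsp)
    finally show "A \<in> span (W ` P)" .
  qed
  have "dim {A::real^'n^'n. skew A} \<le> card (W ` P)"
    by (rule dim_le_card[OF sub]) simp
  also have "\<dots> \<le> card P" by (rule card_image_le) simp
  also have "card P \<le> card {B. B \<subseteq> (UNIV::'n set) \<and> card B = 2}"
  proof (rule card_inj_on_le)
    show "inj_on (\<lambda>(a,b). {a,b}) P"
      unfolding P_def by (auto intro!: inj_onI simp: doubleton_eq_iff)
    show "(\<lambda>(a,b). {a,b}) ` P \<subseteq> {B. B \<subseteq> UNIV \<and> card B = 2}"
      unfolding P_def by (auto simp: card_2_iff)
  qed simp
  also have "\<dots> = CARD('n) choose 2" using n_subsets[of "UNIV::'n set" 2] by simp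
  finally show ?thesis .
qed

lemma complete_basis:
  fixes \<Xi> :: "nat \<Rightarrow> real^'n::finite^'n"
  assumes sk: "\<forall>\<alpha>\<in>{1..N}. skew (\<Xi> \<alpha>)"
    and on: "\<forall>\<alpha>\<in>{1..N}. \<forall>\<beta>\<in>{1..N}. lam_inner (\<Xi> \<alpha>) (\<Xi> \<beta>) = (if \<alpha> = \<beta> then 1 else 0)"
    and N: "N = CARD('n) choose 2" and H: "skew H"
  shows "H = (\<Sum>\<alpha>=1..N. lam_inner (\<Xi> \<alpha>) H *\<^sub>R \<Xi> \<alpha>)"
proof -
  define B where "B = \<Xi> ` {1..N}"
  have inj: "inj_on \<Xi> {1..N}"
  proof (rule inj_onI)
    fix x y assume "x \<in> {1..N}" "y \<in> {1..N}" "\<Xi> x = \<Xi> y"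
    then show "x = y" using on by (metis one_neq_zero)
  qed
  have cB: "card B = N" unfolding B_def using card_image[OF inj] by simp
  have BS: "B \<subseteq> {A. skew A}" using sk B_def by auto
  have indep: "independent B"
  proof (rule pairwise_orthogonal_independent)
    show "pairwise orthogonal B"
      unfolding pairwise_def orthogonal_def B_def using on
      by (auto simp: lam_inner_inner)
    show "0 \<notin> B"
    proof
      assume "0 \<in> B"
      then obtain x where x: "x \<in> {1..N}" "\<Xi> x = 0" unfolding B_def by auto
      have "lam_inner (\<Xi> x) (\<Xi> x) = 1" using on[rule_format, OF x(1) x(1)] by simp
      moreover have "lam_inner (\<Xi> x) (\<Xi> x) = 0" using x by (simp add: lam_inner_inner)
      ultimately show False by simp
    qed
  qed
  have "{A. skew A} \<subseteq> span B"
    by (rule card_ge_dim_independent[OF BS indep]) (simp add: cB N dim_skew)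
  then have Hs: "H \<in> span B" using H by auto
  define r where "r = H - (\<Sum>\<alpha>=1..N. lam_inner (\<Xi> \<alpha>) H *\<^sub>R \<Xi> \<alpha>)"
  have rs: "r \<in> span B" unfolding r_def
    by (intro span_diff Hs span_sum span_mul span_base) (auto simp: B_def)
  have orth: "orthogonal r y" if yB: "y \<in> B" for y
  proof -
    obtain \<beta> where b: "\<beta> \<in> {1..N}" "y = \<Xi> \<beta>" using yB unfolding B_def by blast
    have "lam_inner (\<Xi> \<beta>) r = lam_inner (\<Xi> \<beta>) H - (\<Sum>\<alpha>=1..N. lam_inner (\<Xi> \<alpha>) H * lam_inner (\<Xi> \<beta>) (\<Xi> \<alpha>))"
      unfolding r_def lam_inner_inner by (simp add: inner_diff_right inner_sum_right sum_divide_distrib diff_divide_distrib)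
    also have "\<dots> = lam_inner (\<Xi> \<beta>) H - (\<Sum>\<alpha>=1..N. if \<alpha> = \<beta> then lam_inner (\<Xi> \<alpha>) H else 0)"
      using on b by (intro arg_cong2[where f=minus] refl sum.cong) auto
    also have "\<dots> = 0" using b by (simp add: lam_inner_inner)
    finally show ?thesis using b by (simp add: orthogonal_def lam_inner_inner inner_commute)
  qed
  have "orthogonal r r" using orthogonal_to_span[OF rs orth] .
  then have "r = 0" by (simp add: orthogonal_def)
  then show ?thesis by (simp add: r_def)
qed



lemma key:
  fixes w lam :: "nat \<Rightarrow> real" and C W :: real
  assumes sorted: "\<forall>i j. 1 \<le> i \<longrightarrow> i \<le> j \<longrightarrow> j \<le> N \<longrightarrow> lam i \<le> lam j"
    and w0: "\<forall>\<alpha>\<in>{1..N}. 0 \<le> w \<alpha>" and wC: "\<forall>\<alpha>\<in>{1..N}. w \<alpha> \<le> W / C"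
    and W: "W = (\<Sum>\<alpha>=1..N. w \<alpha>)" and C: "1 \<le> C" and m1: "1 \<le> m" and mC: "real m \<le> C" and mN: "m \<le> N"
  shows "W * (\<Sum>i=1..m. lam i) / m \<le> (\<Sum>\<alpha>=1..N. lam \<alpha> * w \<alpha>)"
proof -
  define \<mu> where "\<mu> = lam m"
  define S where "S = (\<Sum>i=1..m. lam i)"
  have W0: "0 \<le> W" unfolding W using w0 by (intro sum_nonneg) auto
  have split: "{1..N} = {1..m} \<union> {m+1..N}" using mN m1 by auto
  have disj: "{1..m} \<inter> {m+1..N} = {}" by auto
  have "(\<Sum>\<alpha>=1..N. lam \<alpha> * w \<alpha>) = (\<Sum>\<alpha>=1..N. (lam \<alpha> - \<mu>) * w \<alpha>) + \<mu> * W"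
    by (simp add: W algebra_simps sum.distrib sum_distrib_left sum_subtractf)
  also have "(\<Sum>\<alpha>=1..N. (lam \<alpha> - \<mu>) * w \<alpha>) = (\<Sum>\<alpha>=1..m. (lam \<alpha> - \<mu>) * w \<alpha>) + (\<Sum>\<alpha>=m+1..N. (lam \<alpha> - \<mu>) * w \<alpha>)"
    unfolding split by (rule sum.union_disjoint) (auto)
  also have "(\<Sum>\<alpha>=m+1..N. (lam \<alpha> - \<mu>) * w \<alpha>) \<ge> 0"
  proof (rule sum_nonneg)
    fix \<alpha> assume a: "\<alpha> \<in> {m+1..N}"
    then have "lam \<alpha> - \<mu> \<ge> 0" using sorted m1 unfolding \<mu>_def by auto
    moreover have "w \<alpha> \<ge> 0" using w0 a m1 by auto
    ultimately show "(lam \<alpha> - \<mu>) * w \<alpha> \<ge> 0" by simp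
  qed
  moreover have "(\<Sum>\<alpha>=1..m. (lam \<alpha> - \<mu>) * w \<alpha>) \<ge> (\<Sum>\<alpha>=1..m. (lam \<alpha> - \<mu>) * (W / C))"
  proof (rule sum_mono)
    fix \<alpha> assume a: "\<alpha> \<in> {1..m}"
    then have "lam \<alpha> - \<mu> \<le> 0" using sorted mN unfolding \<mu>_def by auto
    moreover have "w \<alpha> \<le> W / C" using wC a mN by auto
    ultimately show "(lam \<alpha> - \<mu>) * (W / C) \<le> (lam \<alpha> - \<mu>) * w \<alpha>" by (metis mult_left_mono_neg)
  qed
  moreover have "(\<Sum>\<alpha>=1..m. (lam \<alpha> - \<mu>) * (W / C)) = (S - m * \<mu>) * (W / C)"
    unfolding S_def sum_distrib_right[symmetric] by (simp add: sum_subtractf)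
  moreover have Sm: "S \<le> m * \<mu>"
  proof -
    have "S \<le> (\<Sum>i=1..m. \<mu>)" unfolding S_def \<mu>_def using sorted mN by (intro sum_mono) auto
    then show ?thesis by simp
  qed
  ultimately have "(\<Sum>\<alpha>=1..N. lam \<alpha> * w \<alpha>) \<ge> (S - m * \<mu>) * (W / C) + \<mu> * W" by linarith
  moreover have "(S - m * \<mu>) * (W / C) + \<mu> * W \<ge> W * S / m"
  proof -
    have m0: "real m > 0" using m1 by simp
    have C0: "C > 0" using C by simp
    have "\<mu> \<ge> S / m" using Sm m0 by (simp add: field_simps)
    moreover have "W * (1 - m / C) \<ge> 0"
    proof -
      have "1 - m / C \<ge> 0" using mC C0 by (simp add: field_simps)
      then show ?thesis using W0 by simp
    qed
    ultimately have "\<mu> * (W * (1 - m / C)) \<ge> S / m * (W * (1 - m / C))" by (rule mult_right_mono)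
    moreover have "(S - m * \<mu>) * (W / C) + \<mu> * W = S * W / C + \<mu> * (W * (1 - m / C))"
      using C0 by (simp add: field_simps)
    moreover have "S / m * (W * (1 - m / C)) + S * W / C = W * S / m"
      using C0 m0 by (simp add: field_simps)
    ultimately show ?thesis by linarith
  qed
  ultimately show ?thesis unfolding S_def by linarith
qed



lemma lam_inner_sum_left:
  "lam_inner (\<Sum>\<alpha>\<in>A. c \<alpha> *\<^sub>R X \<alpha>) Y = (\<Sum>\<alpha>\<in>A. c \<alpha> * lam_inner (X \<alpha>) Y)"
  unfolding lam_inner_inner by (simp add: inner_sum_left sum_divide_distrib)

lemma lam_inner_nonneg: "0 \<le> lam_inner A A"
  unfolding lam_inner_inner by simp

lemma lam_inner_pos: "A \<noteq> 0 \<Longrightarrow> 0 < lam_inner A A"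
  unfolding lam_inner_inner by simp

theorem lemma2p1:
  fixes R :: "real^'n::finite^'n \<Rightarrow> real^'n^'n"
    and lam :: "nat \<Rightarrow> real"
    and T :: "(real^'n) list \<Rightarrow> real"
    and k :: nat and C \<kappa> :: real
  assumes "alg_curv_op R"
    and "curv_eigenvalues R lam"
    and "tensor k T"
    and "C \<ge> 1"
    and "\<forall>L. skew L \<longrightarrow> tnorm2 k (act L T) \<le> (1 / C) * hat_norm2 k T * lam_inner L L"
    and "\<kappa> \<le> 0"
  shows "((1 / real (nat \<lfloor>C\<rfloor>)) * (\<Sum>i=1..nat \<lfloor>C\<rfloor>. lam i) \<ge> \<kappa>
            \<longrightarrow> curv_pairing R k T \<ge> \<kappa> * hat_norm2 k T)
       \<and> ((\<Sum>i=1..nat \<lfloor>C\<rfloor>. lam i) > 0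
            \<longrightarrow> (\<exists>Xs. length Xs = k \<and> hat T Xs \<noteq> 0) \<longrightarrow> curv_pairing R k T > 0)"
proof -
  note acR = assms(1) and tT = assms(3) and C1 = assms(4) and hyp = assms(5)
  define N where "N = CARD('n) choose 2"
  have sorted: "\<forall>i j. 1 \<le> i \<longrightarrow> i \<le> j \<longrightarrow> j \<le> N \<longrightarrow> lam i \<le> lam j"
    using assms(2) unfolding curv_eigenvalues_def Let_def N_def by blast
  obtain \<Xi> :: "nat \<Rightarrow> real^'n^'n" where
    sk: "\<forall>\<alpha>\<in>{1..N}. skew (\<Xi> \<alpha>) \<and> R (\<Xi> \<alpha>) = lam \<alpha> *\<^sub>R \<Xi> \<alpha>" and
    on: "\<forall>\<alpha>\<in>{1..N}. \<forall>\<beta>\<in>{1..N}. lam_inner (\<Xi> \<alpha>) (\<Xi> \<beta>) = (if \<alpha> = \<beta> then 1 else 0)"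
    using assms(2) unfolding curv_eigenvalues_def Let_def N_def by blast
  have skX: "\<forall>\<alpha>\<in>{1..N}. skew (\<Xi> \<alpha>)" using sk by blast
  define Is where "Is = {ls::'n list. length ls = k}"
  have fIs: "finite Is" unfolding Is_def using finite_lists_length_eq[of "UNIV::'n set" k] by simp
  define H where "H ls = hat T (map e ls)" for ls
  define c where "c \<alpha> ls = lam_inner (\<Xi> \<alpha>) (H ls)" for \<alpha> ls
  define w where "w \<alpha> = tnorm2 k (act (\<Xi> \<alpha>) T)" for \<alpha>
  define W where "W = hat_norm2 k T"
  have w_eq: "w \<alpha> = (\<Sum>ls\<in>Is. (c \<alpha> ls)\<^sup>2)" if "\<alpha> \<in> {1..N}" for \<alpha>
    unfolding w_def tnorm2_def Is_def c_def H_def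
    using act_hat[OF _ tT] skX that by (intro sum.cong refl) auto
  have expn: "H ls = (\<Sum>\<alpha>=1..N. c \<alpha> ls *\<^sub>R \<Xi> \<alpha>)" for ls
    unfolding c_def by (rule complete_basis[OF skX on N_def]) (simp add: H_def skew_hat)
  have HH: "lam_inner (H ls) (H ls) = (\<Sum>\<alpha>=1..N. (c \<alpha> ls)\<^sup>2)" for ls
  proof -
    have "lam_inner (H ls) (H ls) = lam_inner (\<Sum>\<alpha>=1..N. c \<alpha> ls *\<^sub>R \<Xi> \<alpha>) (H ls)"
      using expn[of ls] by (rule arg_cong[where f="\<lambda>X. lam_inner X (H ls)"])
    also have "\<dots> = (\<Sum>\<alpha>=1..N. c \<alpha> ls * c \<alpha> ls)"
      by (simp add: lam_inner_sum_left c_def)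
    finally show ?thesis by (simp add: power2_eq_square)
  qed
  have RHH: "lam_inner (R (H ls)) (H ls) = (\<Sum>\<alpha>=1..N. lam \<alpha> * (c \<alpha> ls)\<^sup>2)" for ls
  proof -
    have "R (H ls) = (\<Sum>\<alpha>=1..N. c \<alpha> ls *\<^sub>R R (\<Xi> \<alpha>))"
      using expn[of ls] R_sum[OF acR, of "{1..N}" \<Xi> "\<lambda>\<alpha>. c \<alpha> ls"] skX by simp
    also have "\<dots> = (\<Sum>\<alpha>=1..N. (c \<alpha> ls * lam \<alpha>) *\<^sub>R \<Xi> \<alpha>)"
      using sk by (intro sum.cong refl) auto
    finally have "lam_inner (R (H ls)) (H ls) = lam_inner (\<Sum>\<alpha>=1..N. (c \<alpha> ls * lam \<alpha>) *\<^sub>R \<Xi> \<alpha>) (H ls)"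
      by simp
    also have "\<dots> = (\<Sum>\<alpha>=1..N. c \<alpha> ls * lam \<alpha> * c \<alpha> ls)"
      by (simp add: lam_inner_sum_left c_def)
    finally show ?thesis by (simp add: power2_eq_square mult_ac)
  qed
  have W_eq: "W = (\<Sum>\<alpha>=1..N. w \<alpha>)"
  proof -
    have "W = (\<Sum>ls\<in>Is. \<Sum>\<alpha>=1..N. (c \<alpha> ls)\<^sup>2)"
      unfolding W_def hat_norm2_def Is_def using HH by (simp add: H_def)
    also have "\<dots> = (\<Sum>\<alpha>=1..N. \<Sum>ls\<in>Is. (c \<alpha> ls)\<^sup>2)" by (rule sum.swap)
    also have "\<dots> = (\<Sum>\<alpha>=1..N. w \<alpha>)" using w_eq by simp
    finally show ?thesis .
  qed
  have CP_eq: "curv_pairing R k T = (\<Sum>\<alpha>=1..N. lam \<alpha> * w \<alpha>)"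
  proof -
    have "curv_pairing R k T = (\<Sum>ls\<in>Is. \<Sum>\<alpha>=1..N. lam \<alpha> * (c \<alpha> ls)\<^sup>2)"
      unfolding curv_pairing_def Is_def using RHH by (simp add: H_def)
    also have "\<dots> = (\<Sum>\<alpha>=1..N. \<Sum>ls\<in>Is. lam \<alpha> * (c \<alpha> ls)\<^sup>2)" by (rule sum.swap)
    also have "\<dots> = (\<Sum>\<alpha>=1..N. lam \<alpha> * w \<alpha>)" using w_eq by (simp add: sum_distrib_left)
    finally show ?thesis .
  qed
  have w0: "\<forall>\<alpha>\<in>{1..N}. 0 \<le> w \<alpha>" using w_eq by (auto intro: sum_nonneg)
  have wC: "\<forall>\<alpha>\<in>{1..N}. w \<alpha> \<le> W / C"
  proof
    fix \<alpha> assume a: "\<alpha> \<in> {1..N}"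
    have "w \<alpha> \<le> (1 / C) * W * lam_inner (\<Xi> \<alpha>) (\<Xi> \<alpha>)"
      using hyp skX a unfolding w_def W_def by blast
    also have "lam_inner (\<Xi> \<alpha>) (\<Xi> \<alpha>) = 1" using on a by simp
    finally show "w \<alpha> \<le> W / C" by simp
  qed
  have W0: "0 \<le> W" unfolding W_eq using w0 by (intro sum_nonneg) auto
  define m where "m = nat \<lfloor>C\<rfloor>"
  have m1: "1 \<le> m" using C1 unfolding m_def by linarith
  have mC: "real m \<le> C" using C1 unfolding m_def by linarith
  have mN: "m \<le> N" if "W > 0"
  proof -
    have "W \<le> (\<Sum>\<alpha>=1..N. W / C)" unfolding W_eq using wC by (intro sum_mono) (auto simp: W_eq)
    also have "\<dots> = N * W / C" by simp
    finally have "W * C \<le> N * W" using C1 by (simp add: field_simps)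
    then have "C \<le> N" using that by (simp add: mult.commute)
    then show ?thesis using mC by linarith
  qed
  have main: "W * (\<Sum>i=1..m. lam i) / m \<le> curv_pairing R k T" if "W > 0"
    unfolding CP_eq by (rule key[OF sorted w0 wC W_eq C1 m1 mC mN[OF that]])
  have Wzero: "curv_pairing R k T = 0" if "W = 0"
  proof -
    have "\<forall>\<alpha>\<in>{1..N}. w \<alpha> = 0" using w0 wC that by (metis div_0 order_antisym)
    then show ?thesis unfolding CP_eq by simp
  qed
  have Wpos: "W > 0" if exX: "\<exists>Xs. length Xs = k \<and> hat T Xs \<noteq> 0"
  proof -
    obtain Xs where Xs: "length Xs = k" "hat T Xs \<noteq> 0" using exX by blast
    define Lx where "Lx = hat T Xs"
    have "act Lx T Xs = lam_inner Lx Lx"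
      unfolding Lx_def by (rule act_hat[OF skew_hat tT Xs(1)])
    then have "act Lx T Xs \<noteq> 0" using lam_inner_pos[of Lx] Xs(2) Lx_def by simp
    then obtain ls where ls: "length ls = k" "act Lx T (map e ls) \<noteq> 0"
      using vanish[OF tensor_act[OF tT, of Lx] _ Xs(1)] by blast
    have "act Lx T (map e ls) = lam_inner Lx (H ls)"
      unfolding H_def Lx_def by (rule act_hat[OF skew_hat tT]) (simp add: ls)
    then have "H ls \<noteq> 0" using ls(2) by (auto simp: lam_inner_inner)
    then have pos: "0 < lam_inner (H ls) (H ls)" by (rule lam_inner_pos)
    have "lam_inner (H ls) (H ls) \<le> (\<Sum>js\<in>Is. lam_inner (H js) (H js))"
      using ls(1) fIs by (intro member_le_sum) (auto simp: Is_def lam_inner_nonneg)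
    also have "\<dots> = W" unfolding W_def hat_norm2_def Is_def H_def by simp
    finally show ?thesis using pos by linarith
  qed
  show ?thesis
  proof (intro conjI impI)
    assume ka: "(1 / real (nat \<lfloor>C\<rfloor>)) * (\<Sum>i=1..nat \<lfloor>C\<rfloor>. lam i) \<ge> \<kappa>"
    show "curv_pairing R k T \<ge> \<kappa> * hat_norm2 k T"
    proof (cases "W = 0")
      case True then show ?thesis using Wzero W_def by simp
    next
      case False
      then have Wp: "W > 0" using W0 by simp
      have "\<kappa> * W \<le> ((1 / real m) * (\<Sum>i=1..m. lam i)) * W"
        using ka Wp unfolding m_def by (intro mult_right_mono) auto
      also have "\<dots> = W * (\<Sum>i=1..m. lam i) / m" by simp
      also have "\<dots> \<le> curv_pairing R k T" by (rule main[OF Wp])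
      finally show ?thesis unfolding W_def .
    qed
  next
    assume Sp: "(\<Sum>i=1..nat \<lfloor>C\<rfloor>. lam i) > 0" and ex: "\<exists>Xs. length Xs = k \<and> hat T Xs \<noteq> 0"
    have Wp: "W > 0" by (rule Wpos[OF ex])
    have "0 < W * (\<Sum>i=1..m. lam i) / m" using Wp Sp m1 C1 unfolding m_def by (intro divide_pos_pos mult_pos_pos) auto
    also have "\<dots> \<le> curv_pairing R k T" by (rule main[OF Wp])
    finally show "curv_pairing R k T > 0" .
  qed
qed

end
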